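(* Let $\Gamma$ be an oriented hypergraph with $A\neq\mathbf 0$ and strong coloring number $\chi=\chi(\Gamma)$, and suppose $\chi=\dfrac{\lambda_N-\lambda_1}{\lambda_N-1}$. Let $h$ be any eigenfunction of $L$ with eigenvalue $\lambda_1$, and let $V_1,\dots,V_\chi$ be the color classes of any proper strong $\chi$-coloring. Then: (1) $\operatorname{supp}(h)\cap V_i\neq\varnothing$ for all $1\le i\le\chi$; (2) $S^h_{ij}\ge 0$ for all $1\le i<j\le\chi$; (3) for all $1\le i<j\le\chi$, $\mathrm{RQ}(h_{ij})=\lambda_N=\dfrac{\chi-\lambda_1}{\chi-1}$, and $h_{ij}$ is an eigenfunction of $L$ with eigenvalue $\lambda_N$. Consequently the multiplicity $m_\Gamma(\lambda_N)$ of $\lambda_N=(\chi-\lambda_1)/(\chi-1)$ is at least $\chi-1$, and this inequality is strict if $m_\Gamma(\lambda_1)>1$.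
   Context: An oriented hypergraph $\Gamma=(V,E,\varphi)$ consists of a finite vertex set $V$ with $|V|=N$, an edge set $E\subseteq\mathcal P(V)$, and a function $\varphi\colon V\times E\to\{-1,0,1\}$ with $\varphi(v,e)\neq 0$ iff $v\in e$. Two vertices $v,w\in e$ are co-oriented in $e$ if $\varphi(v,e)=\varphi(w,e)$ and anti-oriented in $e$ if $\varphi(v,e)=-\varphi(w,e)$. The degree is $\deg v=|\{e\in E: v\in e\}|$; we assume every vertex has degree at least $1$, and $D=\mathrm{diag}(\deg v)_{v\in V}$. The adjacency matrix $A$ is the $N\times N$ matrix with $A_{v,v}=0$ and, for $v\neq w$, $A_{v,w}=(\#\text{edges in which } v,w \text{ are anti-oriented})-(\#\text{edges in which } v,w \text{ are co-oriented})$. The normalized Laplacian is $L=\mathrm{Id}-D^{-1}A$; it is self-adjoint for $\langle f,g\rangle=\sum_{v}\deg v\, f(v)g(v)$ on functions $V\to\mathbb R$, with (real) eigenvalues $\lambda_1\le\dots\le\lambda_N$; $m_\Gamma(\lambda)$ denotes the multiplicity of $\lambda$. The Rayleigh quotient of $f\neq0$ is $\mathrm{RQ}(f)=\langle Lf,f\rangle/\langle f,f\rangle$. A proper strong $k$-coloring is a map $V\to\{1,\dots,k\}$ such that any two distinct vertices in a common edge receive different colors; $\chi(\Gamma)$ is the least such $k$. For a function $h\colon V\to\mathbb R$ and color classes $V_1,\dots,V_\chi$, define $S^h_{ij}=\sum_{v\in V_i,\,w\in V_j}A_{v,w}h(v)h(w)$, and define $h_{ij}\colon V\to\mathbb R$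 by $h_{ij}(v)=h(v)$ if $v\in V_i$, $h_{ij}(v)=-h(v)$ if $v\in V_j$, and $h_{ij}(v)=0$ otherwise. *)

theory Defs
  imports "HOL-Analysis.Analysis"
begin

text \<open>Oriented hypergraph on the finite vertex type 'v (vertex set V = UNIV),
  edge set E, incidence function phi : V x E -> {-1,0,1}.\<close>

definition oriented_hypergraph :: "'v::finite set set \<Rightarrow> ('v \<Rightarrow> 'v set \<Rightarrow> int) \<Rightarrow> bool" where
  "oriented_hypergraph E \<phi> \<longleftrightarrow>
     (\<forall>v. \<forall>e\<in>E. \<phi> v e \<in> {-1, 0, 1}) \<and> (\<forall>v. \<forall>e\<in>E. \<phi> v e \<noteq> 0 \<longleftrightarrow> v \<in> e)"

definition hdeg :: "'v set set \<Rightarrow> 'v \<Rightarrow> nat" where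
  "hdeg E v = card {e \<in> E. v \<in> e}"

definition hadj :: "'v set set \<Rightarrow> ('v \<Rightarrow> 'v set \<Rightarrow> int) \<Rightarrow> 'v \<Rightarrow> 'v \<Rightarrow> real" where
  "hadj E \<phi> v w = (if v = w then 0 else
      real (card {e \<in> E. v \<in> e \<and> w \<in> e \<and> \<phi> v e = - \<phi> w e})
    - real (card {e \<in> E. v \<in> e \<and> w \<in> e \<and> \<phi> v e = \<phi> w e}))"

definition hlap :: "'v::finite set set \<Rightarrow> ('v \<Rightarrow> 'v set \<Rightarrow> int) \<Rightarrow> real ^ 'v \<Rightarrow> real ^ 'v" where
  "hlap E \<phi> f = (\<chi> v. f $ v - (\<Sum>w\<in>UNIV. hadj E \<phi> v w * f $ w) / real (hdeg E v))"

definition hinner :: "'v::finite set set \<Rightarrow> real ^ 'v \<Rightarrow> real ^ 'v \<Rightarrow> real" where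
  "hinner E f g = (\<Sum>v\<in>UNIV. real (hdeg E v) * f $ v * g $ v)"

definition RQ :: "'v::finite set set \<Rightarrow> ('v \<Rightarrow> 'v set \<Rightarrow> int) \<Rightarrow> real ^ 'v \<Rightarrow> real" where
  "RQ E \<phi> f = hinner E (hlap E \<phi> f) f / hinner E f f"

definition is_eigenfunction :: "'v::finite set set \<Rightarrow> ('v \<Rightarrow> 'v set \<Rightarrow> int) \<Rightarrow> real \<Rightarrow> real ^ 'v \<Rightarrow> bool" where
  "is_eigenfunction E \<phi> lam f \<longleftrightarrow> f \<noteq> 0 \<and> hlap E \<phi> f = lam *\<^sub>R f"

definition eigenvalues :: "'v::finite set set \<Rightarrow> ('v \<Rightarrow> 'v set \<Rightarrow> int) \<Rightarrow> real set" where
  "eigenvalues E \<phi> = {lam. \<exists>f. is_eigenfunction E \<phi> lam f}"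

definition lambda_min :: "'v::finite set set \<Rightarrow> ('v \<Rightarrow> 'v set \<Rightarrow> int) \<Rightarrow> real" where
  "lambda_min E \<phi> = Min (eigenvalues E \<phi>)"

definition lambda_max :: "'v::finite set set \<Rightarrow> ('v \<Rightarrow> 'v set \<Rightarrow> int) \<Rightarrow> real" where
  "lambda_max E \<phi> = Max (eigenvalues E \<phi>)"

text \<open>Multiplicity of an eigenvalue (L is self-adjoint, so geometric = algebraic):
  dimension of the eigenspace.\<close>
definition eig_mult :: "'v::finite set set \<Rightarrow> ('v \<Rightarrow> 'v set \<Rightarrow> int) \<Rightarrow> real \<Rightarrow> nat" where
  "eig_mult E \<phi> lam = dim {f. hlap E \<phi> f = lam *\<^sub>R f}"

definition proper_strong_coloring :: "'v set set \<Rightarrow> nat \<Rightarrow> ('v \<Rightarrow> nat) \<Rightarrow> bool" where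
  "proper_strong_coloring E k c \<longleftrightarrow>
     (\<forall>v. c v \<in> {1..k}) \<and> (\<forall>e\<in>E. \<forall>v\<in>e. \<forall>w\<in>e. v \<noteq> w \<longrightarrow> c v \<noteq> c w)"

definition chrom :: "'v set set \<Rightarrow> nat" where
  "chrom E = (LEAST k. \<exists>c. proper_strong_coloring E k c)"

definition S_h :: "'v::finite set set \<Rightarrow> ('v \<Rightarrow> 'v set \<Rightarrow> int) \<Rightarrow> ('v \<Rightarrow> nat) \<Rightarrow> real ^ 'v \<Rightarrow> nat \<Rightarrow> nat \<Rightarrow> real" where
  "S_h E \<phi> c h i j = (\<Sum>v\<in>{v. c v = i}. \<Sum>w\<in>{w. c w = j}. hadj E \<phi> v w * h $ v * h $ w)"

definition h_ij :: "('v::finite \<Rightarrow> nat) \<Rightarrow> real ^ 'v \<Rightarrow> nat \<Rightarrow> nat \<Rightarrow> real ^ 'v" where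
  "h_ij c h i j = (\<chi> v. if c v = i then h $ v else if c v = j then - h $ v else 0)"

end

theory Submission
  imports Defs
begin

locale OH =
  fixes E :: "'v::finite set set" and \<phi> :: "'v \<Rightarrow> 'v set \<Rightarrow> int"
  assumes deg: "\<forall>v. hdeg E v \<ge> 1"
begin

abbreviation d where "d v \<equiv> real (hdeg E v)"
abbreviation a where "a \<equiv> hadj E \<phi>"
abbreviation L where "L \<equiv> hlap E \<phi>"
abbreviation ip where "ip \<equiv> hinner E"
definition Q where "Q f = ip (L f) f"
definition B where "B f = (\<Sum>v\<in>UNIV. \<Sum>w\<in>UNIV. a v w * f $ v * f $ w)"

lemma d_pos: "d v > 0" using deg by (metis of_nat_0_less_iff less_le_trans zero_less_one)

lemma a_sym: "a v w = a w v"
proof -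
  have 1: "{e \<in> E. v \<in> e \<and> w \<in> e \<and> \<phi> v e = - \<phi> w e} = {e \<in> E. w \<in> e \<and> v \<in> e \<and> \<phi> w e = - \<phi> v e}" by auto
  have 2: "{e \<in> E. v \<in> e \<and> w \<in> e \<and> \<phi> v e = \<phi> w e} = {e \<in> E. w \<in> e \<and> v \<in> e \<and> \<phi> w e = \<phi> v e}" by auto
  show ?thesis unfolding hadj_def using 1 2 by auto
qed

lemma sum_two: "v \<noteq> w \<Longrightarrow> (\<Sum>x\<in>{v,w}. F x) = F v + (F w :: real)"
  by simp

lemma a_diag: "a v v = 0" unfolding hadj_def by simp

lemma ip_sym: "ip f g = ip g f"
  unfolding hinner_def by (simp add: mult_ac)

lemma ip_add: "ip (f + g) k = ip f k + ip g k"
  unfolding hinner_def by (simp add: algebra_simps sum.distrib)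

lemma ip_diff: "ip (f - g) k = ip f k - ip g k"
  unfolding hinner_def by (simp add: algebra_simps sum_subtractf)

lemma ip_scale: "ip (t *\<^sub>R f) k = t * ip f k"
  unfolding hinner_def by (simp add: algebra_simps sum_distrib_left)

lemma ip_add_r: "ip k (f + g) = ip k f + ip k g"
  unfolding hinner_def by (simp add: algebra_simps sum.distrib)

lemma ip_scale_r: "ip k (t *\<^sub>R f) = t * ip k f"
  unfolding hinner_def by (simp add: algebra_simps sum_distrib_left)

lemma ip_zero: "ip 0 k = 0"
  unfolding hinner_def by simp

lemma ip_sum: "finite S \<Longrightarrow> ip (\<Sum>x\<in>S. u x *\<^sub>R x) g = (\<Sum>x\<in>S. u x * ip x g)"
  unfolding hinner_def sum_component
  by (simp add: sum_distrib_left sum_distrib_right mult_ac sum.swap[of _ S])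

lemma L_add: "L (f + g) = L f + L g"
  unfolding hlap_def by (simp add: vec_eq_iff algebra_simps sum.distrib add_divide_distrib)

lemma L_scale: "L (t *\<^sub>R f) = t *\<^sub>R L f"
  unfolding hlap_def by (simp add: vec_eq_iff algebra_simps sum_distrib_left)

lemma L_diff: "L (f - g) = L f - L g"
  unfolding hlap_def by (simp add: vec_eq_iff algebra_simps sum_subtractf diff_divide_distrib)

lemma ip_L: "ip (L f) g = ip f g - (\<Sum>v\<in>UNIV. \<Sum>w\<in>UNIV. a v w * f $ w * g $ v)"
proof -
  have "ip (L f) g = (\<Sum>v\<in>UNIV. d v * f $ v * g $ v - (\<Sum>w\<in>UNIV. a v w * f $ w) * g $ v)"
    unfolding hinner_def hlap_def using d_pos
    by (intro sum.cong) (auto simp: field_simps)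
  also have "\<dots> = ip f g - (\<Sum>v\<in>UNIV. \<Sum>w\<in>UNIV. a v w * f $ w * g $ v)"
    unfolding hinner_def by (simp add: sum_subtractf sum_distrib_right)
  finally show ?thesis .
qed

lemma L_selfadj: "ip (L f) g = ip f (L g)"
proof -
  have "(\<Sum>v\<in>UNIV. \<Sum>w\<in>UNIV. a v w * f $ w * g $ v) = (\<Sum>v\<in>UNIV. \<Sum>w\<in>UNIV. a v w * g $ w * f $ v)"
    by (subst sum.swap) (simp add: a_sym mult_ac)
  thus ?thesis using ip_L[of f g] ip_L[of g f] ip_sym[of f g] ip_sym[of f "L g"] by simp
qed

lemma Q_NB: "Q f = ip f f - B f"
  unfolding Q_def B_def ip_L by (simp add: mult_ac)

lemma ip_nonneg: "ip f f \<ge> 0"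
  unfolding hinner_def by (intro sum_nonneg) (metis mult.assoc mult_nonneg_nonneg of_nat_0_le_iff zero_le_square)

lemma ip_pos: "f \<noteq> 0 \<Longrightarrow> ip f f > 0"
proof -
  assume "f \<noteq> 0"
  then obtain v where v: "f $ v \<noteq> 0" by (auto simp: vec_eq_iff)
  have "0 < d v * f $ v * f $ v" using d_pos[of v] v
    by (metis mult.assoc mult_pos_pos not_real_square_gt_zero)
  also have "\<dots> \<le> ip f f" unfolding hinner_def
    using d_pos by (intro member_le_sum) (auto simp: less_imp_le mult.assoc)
  finally show ?thesis .
qed

lemma ip_eq0: "ip f f = 0 \<longleftrightarrow> f = 0"
  by (metis ip_pos ip_zero less_irrefl)

lemma Q_scale: "Q (t *\<^sub>R f) = t * t * Q f"
proof -
  have "Q (t *\<^sub>R f) = t * ip (t *\<^sub>R f) (L f)" unfolding Q_def L_scale ip_scale ip_sym[of "L f"] ..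
  also have "\<dots> = t * t * Q f" unfolding Q_def ip_scale ip_sym[of "L f"] by simp
  finally show ?thesis .
qed

lemma ip_scale2: "ip (t *\<^sub>R f) (t *\<^sub>R f) = t * t * ip f f"
  using ip_scale ip_sym by (metis mult.assoc)

lemma Q_zero: "Q 0 = 0"
  unfolding Q_def by (simp add: ip_sym[of _ 0] ip_zero)

lemma Q_expand: "Q (f + t *\<^sub>R g) = Q f + 2 * t * ip (L f) g + t * t * Q g"
proof -
  have "Q (f + t *\<^sub>R g) = ip (L f) f + t * ip (L f) g + t * ip (L g) f + t * t * ip (L g) g"
    unfolding Q_def L_add L_scale ip_add ip_scale
    by (simp add: ip_add ip_scale ip_add_r ip_scale_r algebra_simps)
  also have "ip (L g) f = ip (L f) g" using L_selfadj ip_sym by metis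
  finally show ?thesis unfolding Q_def by simp
qed

lemma N_expand: "ip (f + t *\<^sub>R g) (f + t *\<^sub>R g) = ip f f + 2 * t * ip f g + t * t * ip g g"
  by (simp add: ip_add ip_scale ip_add_r ip_scale_r algebra_simps ip_sym[of g f])

lemma quad_zero:
  fixes aa b :: real
  assumes all: "\<forall>t. 2 * t * b + t * t * aa \<le> 0" and aa: "aa \<le> 0"
  shows "b = 0"
proof -
  define t where "t = b / (1 - aa)"
  have pos: "1 - aa > 0" using aa by simp
  have e1: "(1 - aa) * t = b" using pos by (simp add: t_def)
  have "(1 - aa)^2 * (2 * t * b + t * t * aa) = 2 * (1 - aa) * ((1 - aa) * t) * b + ((1 - aa) * t) * ((1 - aa) * t) * aa"
    by (simp add: power2_eq_square algebra_simps)
  also have "\<dots> = b * b * (2 - aa)" unfolding e1 by (simp add: algebra_simps)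
  finally have eq: "(1 - aa)^2 * (2 * t * b + t * t * aa) = b * b * (2 - aa)" .
  have "(1 - aa)^2 * (2 * t * b + t * t * aa) \<le> 0"
    using all by (simp add: mult_nonneg_nonpos)
  hence "b * b * (2 - aa) \<le> 0" using eq by simp
  moreover have "b * b \<ge> 0" by simp
  moreover have "2 - aa > 0" using aa by simp
  ultimately have "b * b = 0" by (smt (verit) mult_pos_pos)
  thus ?thesis by simp
qed

lemma variational:
  assumes all: "\<forall>g. Q g \<le> \<mu> * ip g g" and f: "Q f = \<mu> * ip f f"
  shows "L f = \<mu> *\<^sub>R f"
proof -
  define r where "r = L f - \<mu> *\<^sub>R f"
  have "\<forall>t. 2 * t * ip r r + t * t * (Q r - \<mu> * ip r r) \<le> 0"
  proof
    fix t
    have "Q (f + t *\<^sub>R r) \<le> \<mu> * ip (f + t *\<^sub>R r) (f + t *\<^sub>R r)" using all by blast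
    hence "Q f + 2 * t * ip (L f) r + t * t * Q r \<le> \<mu> * (ip f f + 2 * t * ip f r + t * t * ip r r)"
      unfolding Q_expand N_expand .
    moreover have eqr: "ip (L f) r = ip r r + \<mu> * ip f r" unfolding r_def ip_diff ip_scale by simp
    moreover have "2 * t * ip r r + t * t * (Q r - \<mu> * ip r r) =
      (Q f + 2 * t * ip (L f) r + t * t * Q r) - \<mu> * (ip f f + 2 * t * ip f r + t * t * ip r r)"
      unfolding eqr f by (simp add: algebra_simps)
    ultimately show "2 * t * ip r r + t * t * (Q r - \<mu> * ip r r) \<le> 0" by linarith
  qed
  hence "ip r r = 0" using quad_zero all by simp
  hence "r = 0" using ip_eq0 by simp
  thus ?thesis unfolding r_def by simp
qed

lemma eig_orth:
  assumes "L f = l *\<^sub>R f" "L g = m *\<^sub>R g" "l \<noteq> m"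
  shows "ip f g = 0"
proof -
  have "l * ip f g = m * ip f g"
    using L_selfadj[of f g] assms(1,2) by (simp add: ip_scale ip_sym[of f "m *\<^sub>R g"] ip_sym[of g f])
  thus ?thesis using assms(3) by simp
qed

lemma finite_eig: "finite (eigenvalues E \<phi>)"
proof (rule ccontr)
  assume "infinite (eigenvalues E \<phi>)"
  then obtain F where F: "finite F" "card F = CARD('v) + 1" "F \<subseteq> eigenvalues E \<phi>"
    using infinite_arbitrarily_large by blast
  define ef where "ef l = (SOME f. is_eigenfunction E \<phi> l f)" for l
  have ef: "is_eigenfunction E \<phi> l (ef l)" if "l \<in> F" for l
    using F(3) that unfolding eigenvalues_def ef_def by (auto intro: someI_ex)
  have Lef: "L (ef l) = l *\<^sub>R ef l" "ef l \<noteq> 0" if "l \<in> F" for l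
    using ef[OF that] unfolding is_eigenfunction_def by auto
  have inj: "inj_on ef F"
  proof (rule inj_onI)
    fix x y assume "x \<in> F" "y \<in> F" "ef x = ef y"
    hence "x *\<^sub>R ef x = y *\<^sub>R ef x" using Lef by metis
    thus "x = y" using Lef(2)[OF \<open>x \<in> F\<close>] by simp
  qed
  have indep: "independent (ef ` F)"
  proof
    assume "dependent (ef ` F)"
    then obtain u x0 where u: "(\<Sum>v\<in>ef ` F. u v *\<^sub>R v) = 0" "x0 \<in> ef ` F" "u x0 \<noteq> 0"
      using dependent_finite[of "ef ` F"] F(1) by blast
    then obtain l0 where l0: "l0 \<in> F" "x0 = ef l0" by blast
    have z: "\<forall>v\<in>ef ` F - {x0}. u v * ip v x0 = 0"
    proof
      fix v assume "v \<in> ef ` F - {x0}"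
      then obtain l where l: "l \<in> F" "v = ef l" "l \<noteq> l0" using l0 by auto
      show "u v * ip v x0 = 0" using eig_orth[OF Lef(1)[OF l(1)] Lef(1)[OF l0(1)] l(3)] l l0 by simp
    qed
    have "0 = ip (\<Sum>v\<in>ef ` F. u v *\<^sub>R v) x0" by (simp add: u ip_zero)
    also have "\<dots> = (\<Sum>v\<in>ef ` F. u v * ip v x0)" by (rule ip_sum) (simp add: F(1))
    also have "\<dots> = u x0 * ip x0 x0 + (\<Sum>v\<in>ef ` F - {x0}. u v * ip v x0)"
      using u(2) F(1) by (simp add: sum.remove)
    also have "\<dots> = u x0 * ip x0 x0" using sum.neutral[OF z] by simp
    finally have "u x0 * ip x0 x0 = 0" by simp
    moreover have "ip x0 x0 > 0" using ip_pos Lef(2)[OF l0(1)] l0(2) by simp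
    ultimately show False using u(3) by simp
  qed
  have "card (ef ` F) \<le> CARD('v)" using independent_bound[OF indep] by simp
  moreover have "card (ef ` F) = card F" using card_image[OF inj] .
  ultimately show False using F(2) by simp
qed

lemma exists_max: "\<exists>M f. f \<noteq> 0 \<and> Q f = M * ip f f \<and> (\<forall>g. Q g \<le> M * ip g g)"
proof -
  define R where "R g = Q g / ip g g" for g
  have cQ: "continuous_on (sphere 0 1) Q"
  proof -
    have "continuous_on (sphere 0 1) (\<lambda>g. ip g g - B g)"
      unfolding hinner_def B_def by (intro continuous_intros)
    moreover have "Q = (\<lambda>g. ip g g - B g)" using Q_NB by (simp add: fun_eq_iff)
    ultimately show ?thesis by simp
  qed
  have cN: "continuous_on (sphere 0 1) (\<lambda>g. ip g g)"
    unfolding hinner_def by (intro continuous_intros)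
  have nz0: "\<forall>g\<in>sphere (0::real^'v) 1. g \<noteq> 0" by auto
  have nz: "\<forall>g\<in>sphere 0 1. ip g g \<noteq> 0" using nz0 ip_pos by (metis less_irrefl)
  have "continuous_on (sphere 0 1) R"
    unfolding R_def by (rule continuous_on_divide[OF cQ cN nz])
  then obtain f where f: "f \<in> sphere (0::real^'v) 1" "\<forall>y\<in>sphere 0 1. R y \<le> R f"
    using continuous_attains_sup[OF compact_sphere, of 0 1 R] by auto
  define M where "M = R f"
  have f0: "f \<noteq> 0" using f(1) nz0 by blast
  have Npos: "ip f f > 0" using ip_pos f0 by simp
  have "\<forall>g. Q g \<le> M * ip g g"
  proof
    fix g
    show "Q g \<le> M * ip g g"
    proof (cases "g = 0")
      case True thus ?thesis by (simp add: Q_zero ip_zero)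
    next
      case False
      define t where "t = 1 / norm g"
      have t0: "t \<noteq> 0" using False by (simp add: t_def)
      have "t *\<^sub>R g \<in> sphere 0 1" using False by (simp add: t_def)
      hence "R (t *\<^sub>R g) \<le> M" using f(2) M_def by blast
      moreover have "R (t *\<^sub>R g) = R g" unfolding R_def Q_scale ip_scale2 using t0 by simp
      ultimately have "Q g / ip g g \<le> M" by (simp add: R_def)
      moreover have "ip g g > 0" using ip_pos False by simp
      ultimately show ?thesis by (simp add: divide_le_eq)
    qed
  qed
  moreover have "Q f = M * ip f f" using Npos by (simp add: M_def R_def)
  ultimately show ?thesis using f0 by blast
qed

lemma lmax_facts:
  assumes Anz: "\<exists>v w. a v w \<noteq> 0"
  shows "lambda_max E \<phi> > 1" "\<forall>g. Q g \<le> lambda_max E \<phi> * ip g g"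
proof -
  obtain M f where f: "f \<noteq> 0" "Q f = M * ip f f" and all: "\<forall>g. Q g \<le> M * ip g g"
    using exists_max by blast
  have "L f = M *\<^sub>R f" using variational[OF all f(2)] .
  hence Meig: "M \<in> eigenvalues E \<phi>" using f(1) unfolding eigenvalues_def is_eigenfunction_def by blast
  have "M \<le> lambda_max E \<phi>" unfolding lambda_max_def using finite_eig Meig by simp
  moreover have "lambda_max E \<phi> \<le> M"
  proof -
    have "lambda_max E \<phi> \<in> eigenvalues E \<phi>" unfolding lambda_max_def
      using finite_eig Meig by (intro Max_in) auto
    then obtain g where g: "g \<noteq> 0" "L g = lambda_max E \<phi> *\<^sub>R g"
      unfolding eigenvalues_def is_eigenfunction_def by blast
    have "Q g = lambda_max E \<phi> * ip g g" unfolding Q_def g(2) ip_scale ..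
    hence "lambda_max E \<phi> * ip g g \<le> M * ip g g" using all by metis
    moreover have "ip g g > 0" using ip_pos g(1) by simp
    ultimately show ?thesis by simp
  qed
  ultimately have MM: "M = lambda_max E \<phi>" by simp
  thus "\<forall>g. Q g \<le> lambda_max E \<phi> * ip g g" using all by simp
  obtain v w where vw: "a v w \<noteq> 0" using Anz by blast
  have vnw: "v \<noteq> w" using vw unfolding hadj_def by auto
  define s :: real where "s = (if a v w > 0 then -1 else 1)"
  have sa: "s * a v w < 0" using vw by (auto simp: s_def)
  define g where "g = (\<chi> x. if x = v then 1 else if x = w then s else (0::real))"
  have gv: "g $ v = 1" "g $ w = s" using vnw by (auto simp: g_def)
  have g0: "g \<noteq> 0" using gv(1) by (metis zero_index zero_neq_one)
  have out: "x \<notin> {v, w} \<Longrightarrow> g $ x = 0" for x by (auto simp: g_def)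
  have "B g = (\<Sum>x\<in>{v,w}. \<Sum>y\<in>UNIV. a x y * g $ x * g $ y)"
    unfolding B_def by (rule sum.mono_neutral_right) (use out in auto)
  also have "\<dots> = (\<Sum>x\<in>{v,w}. \<Sum>y\<in>{v,w}. a x y * g $ x * g $ y)"
    by (intro sum.cong refl sum.mono_neutral_right) (use out in auto)
  also have "\<dots> = a v v * 1 * 1 + a v w * 1 * s + (a w v * s * 1 + a w w * s * s)"
    unfolding sum_two[OF vnw] gv ..
  also have "\<dots> = 2 * (s * a v w)" unfolding a_diag a_sym[of w v] by (simp add: algebra_simps)
  finally have "B g < 0" using sa by simp
  hence "Q g > ip g g" using Q_NB by simp
  moreover have "ip g g > 0" using ip_pos g0 by simp
  moreover have "Q g \<le> M * ip g g" using all by simp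
  ultimately have "1 * ip g g < M * ip g g" by linarith
  hence "1 < M" using \<open>ip g g > 0\<close> by (meson less_imp_le mult_right_less_imp_less)
  thus "lambda_max E \<phi> > 1" using MM by simp
qed

definition pf :: "('v \<Rightarrow> nat) \<Rightarrow> real^'v \<Rightarrow> nat \<Rightarrow> 'v \<Rightarrow> real" where
  "pf c h i v = (if c v = i then h $ v else 0)"
definition Nc where "Nc c h i = (\<Sum>v\<in>UNIV. if c v = i then d v * h $ v * h $ v else 0)"
definition Sc where "Sc c h i j = (\<Sum>v\<in>UNIV. \<Sum>w\<in>UNIV. a v w * pf c h i v * pf c h j w)"

lemma a_same:
  assumes col: "proper_strong_coloring E k c" and "c v = c w"
  shows "a v w = 0"
proof (cases "v = w")
  case True thus ?thesis by (simp add: a_diag)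
next
  case False
  have "\<forall>e\<in>E. \<not> (v \<in> e \<and> w \<in> e)"
    using col assms(2) False unfolding proper_strong_coloring_def by blast
  hence e1: "{e \<in> E. v \<in> e \<and> w \<in> e \<and> \<phi> v e = - \<phi> w e} = {}"
    and e2: "{e \<in> E. v \<in> e \<and> w \<in> e \<and> \<phi> v e = \<phi> w e} = {}" by auto
  show ?thesis unfolding hadj_def e1 e2 by simp
qed

lemma Sc_ii:
  assumes col: "proper_strong_coloring E k c" shows "Sc c h i i = 0"
proof -
  have z: "a v w * pf c h i v * pf c h i w = 0" for v w
    by (cases "c v = i \<and> c w = i") (auto simp: pf_def a_same[OF col])
  show ?thesis unfolding Sc_def z by simp
qed

lemma Sc_sym: "Sc c h i j = Sc c h j i"
  unfolding Sc_def by (subst sum.swap) (simp add: a_sym mult_ac)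

lemma S_h_Sc: "S_h E \<phi> c h i j = Sc c h i j"
proof -
  have "S_h E \<phi> c h i j = (\<Sum>v\<in>UNIV. if c v = i then (\<Sum>w\<in>UNIV. if c w = j then a v w * h $ v * h $ w else 0) else 0)"
    unfolding S_h_def by (simp add: sum.inter_filter[symmetric] Collect_conj_eq[symmetric])
  also have "\<dots> = Sc c h i j" unfolding Sc_def pf_def by (intro sum.cong refl) (auto intro: sum.cong)
  finally show ?thesis .
qed

lemma N_hij: "i \<noteq> j \<Longrightarrow> ip (h_ij c h i j) (h_ij c h i j) = Nc c h i + Nc c h j"
  unfolding hinner_def Nc_def h_ij_def sum.distrib[symmetric] by (intro sum.cong) auto

lemma B_hij: "i \<noteq> j \<Longrightarrow> B (h_ij c h i j) = Sc c h i i - Sc c h i j - Sc c h j i + Sc c h j j"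
proof -
  assume ij: "i \<noteq> j"
  have "B (h_ij c h i j) = (\<Sum>v\<in>UNIV. \<Sum>w\<in>UNIV.
      a v w * pf c h i v * pf c h i w - a v w * pf c h i v * pf c h j w
      - a v w * pf c h j v * pf c h i w + a v w * pf c h j v * pf c h j w)"
    unfolding B_def h_ij_def pf_def using ij by (intro sum.cong refl) auto
  also have "\<dots> = Sc c h i i - Sc c h i j - Sc c h j i + Sc c h j j"
    unfolding Sc_def by (simp add: sum.distrib sum_subtractf)
  finally show ?thesis .
qed

lemma Q_hij:
  assumes col: "proper_strong_coloring E k c" and ij: "i \<noteq> j"
  shows "Q (h_ij c h i j) = Nc c h i + Nc c h j + 2 * Sc c h i j"
  unfolding Q_NB N_hij[OF ij] B_hij[OF ij] Sc_ii[OF col] Sc_sym[of c h j i] by simp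

lemma psum: "finite C \<Longrightarrow> c w \<in> C \<Longrightarrow> (\<Sum>j\<in>C. pf c h j w) = h $ w"
  unfolding pf_def by (simp add: sum.delta)

lemma sum_Nc: "finite C \<Longrightarrow> \<forall>v. c v \<in> C \<Longrightarrow> (\<Sum>i\<in>C. Nc c h i) = ip h h"
  unfolding Nc_def hinner_def by (subst sum.swap) (simp add: sum.delta)

lemma sum_Sc_row: "finite C \<Longrightarrow> \<forall>v. c v \<in> C \<Longrightarrow>
   (\<Sum>j\<in>C. Sc c h i j) = (\<Sum>v\<in>UNIV. \<Sum>w\<in>UNIV. a v w * pf c h i v * h $ w)"
proof -
  assume C: "finite C" "\<forall>v. c v \<in> C"
  have "(\<Sum>j\<in>C. Sc c h i j) = (\<Sum>v\<in>UNIV. \<Sum>j\<in>C. \<Sum>w\<in>UNIV. a v w * pf c h i v * pf c h j w)"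
    unfolding Sc_def by (rule sum.swap)
  also have "\<dots> = (\<Sum>v\<in>UNIV. \<Sum>w\<in>UNIV. \<Sum>j\<in>C. a v w * pf c h i v * pf c h j w)"
    by (intro sum.cong refl) (rule sum.swap)
  also have "\<dots> = (\<Sum>v\<in>UNIV. \<Sum>w\<in>UNIV. a v w * pf c h i v * (\<Sum>j\<in>C. pf c h j w))"
    by (simp add: sum_distrib_left)
  also have "\<dots> = (\<Sum>v\<in>UNIV. \<Sum>w\<in>UNIV. a v w * pf c h i v * h $ w)"
    using psum C by simp
  finally show ?thesis .
qed

lemma sum_Sc: "finite C \<Longrightarrow> \<forall>v. c v \<in> C \<Longrightarrow> (\<Sum>i\<in>C. \<Sum>j\<in>C. Sc c h i j) = B h"
proof -
  assume C: "finite C" "\<forall>v. c v \<in> C"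
  have "(\<Sum>i\<in>C. \<Sum>j\<in>C. Sc c h i j) = (\<Sum>i\<in>C. \<Sum>v\<in>UNIV. \<Sum>w\<in>UNIV. a v w * pf c h i v * h $ w)"
    using sum_Sc_row[OF C] by simp
  also have "\<dots> = (\<Sum>v\<in>UNIV. \<Sum>i\<in>C. \<Sum>w\<in>UNIV. a v w * pf c h i v * h $ w)"
    by (rule sum.swap)
  also have "\<dots> = (\<Sum>v\<in>UNIV. \<Sum>w\<in>UNIV. \<Sum>i\<in>C. a v w * pf c h i v * h $ w)"
    by (intro sum.cong refl) (rule sum.swap)
  also have "\<dots> = (\<Sum>v\<in>UNIV. \<Sum>w\<in>UNIV. a v w * (\<Sum>i\<in>C. pf c h i v) * h $ w)"
    by (simp add: sum_distrib_left sum_distrib_right)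
  also have "\<dots> = B h"
    using psum C unfolding B_def by simp
  finally show ?thesis .
qed

lemma core:
  assumes col: "proper_strong_coloring E k c"
    and all: "\<forall>g. Q g \<le> lN * ip g g" and lN: "lN > 1"
    and h: "L h = l1 *\<^sub>R h" "h \<noteq> 0"
    and eqn: "real k * (lN - 1) = lN - l1"
  shows "\<forall>i\<in>{1..k}. \<exists>v. c v = i \<and> h $ v \<noteq> 0"
    and "\<forall>i\<in>{1..k}. \<forall>j\<in>{1..k}. i \<noteq> j \<longrightarrow>
           Q (h_ij c h i j) = lN * ip (h_ij c h i j) (h_ij c h i j)"
proof -
  define C where "C = {1..k}"
  have fC: "finite C" by (simp add: C_def)
  have cC: "\<forall>v. c v \<in> C" using col unfolding proper_strong_coloring_def C_def by (elim conjE) assumption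
  have cardC: "card C = k" by (simp add: C_def)
  define NH where "NH = ip h h"
  have NHpos: "NH > 0" using ip_pos h(2) by (simp add: NH_def)
  have BH: "B h = (1 - l1) * NH"
  proof -
    have "Q h = l1 * NH" unfolding Q_def h(1) ip_scale NH_def ..
    thus ?thesis using Q_NB[of h] by (simp add: NH_def algebra_simps)
  qed
  define T where "T i j = (lN - 1) * (Nc c h i + Nc c h j) - 2 * Sc c h i j" for i j
  have Tij: "T i j = lN * ip (h_ij c h i j) (h_ij c h i j) - Q (h_ij c h i j)" if "i \<noteq> j" for i j
    unfolding T_def Q_hij[OF col that] N_hij[OF that] by (simp add: algebra_simps)
  have Tnn: "T i j \<ge> 0" if "i \<noteq> j" for i j
    unfolding Tij[OF that] using all by simp
  have Tii: "T i i = 2 * (lN - 1) * Nc c h i" for i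
    unfolding T_def Sc_ii[OF col] by simp
  have sNc: "(\<Sum>i\<in>C. Nc c h i) = NH" using sum_Nc[OF fC cC] by (simp add: NH_def)
  have full: "(\<Sum>i\<in>C. \<Sum>j\<in>C. T i j) = 2 * real k * (lN - 1) * NH - 2 * B h"
  proof -
    have "(\<Sum>i\<in>C. \<Sum>j\<in>C. T i j) = (lN - 1) * (\<Sum>i\<in>C. \<Sum>j\<in>C. Nc c h i + Nc c h j) - 2 * (\<Sum>i\<in>C. \<Sum>j\<in>C. Sc c h i j)"
      unfolding T_def by (simp add: sum_subtractf sum_distrib_left)
    also have "(\<Sum>i\<in>C. \<Sum>j\<in>C. Nc c h i + Nc c h j) = 2 * real k * NH"
      by (simp add: sum.distrib sNc cardC sum_distrib_left[symmetric] sum_distrib_right[symmetric])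
    also have "(\<Sum>i\<in>C. \<Sum>j\<in>C. Sc c h i j) = B h" using sum_Sc[OF fC cC] .
    finally show ?thesis by (simp add: algebra_simps)
  qed
  have diag: "(\<Sum>i\<in>C. T i i) = 2 * (lN - 1) * NH"
    unfolding Tii sNc[symmetric] by (simp add: sum_distrib_left)
  have off: "(\<Sum>i\<in>C. \<Sum>j\<in>C - {i}. T i j) = 0"
  proof -
    have "(\<Sum>i\<in>C. \<Sum>j\<in>C - {i}. T i j) = (\<Sum>i\<in>C. (\<Sum>j\<in>C. T i j) - T i i)"
      using fC by (intro sum.cong refl) (simp add: sum_diff1)
    also have "\<dots> = 2 * real k * (lN - 1) * NH - 2 * B h - 2 * (lN - 1) * NH"
      unfolding sum_subtractf full diag ..
    also have "\<dots> = 2 * NH * (real k * (lN - 1) - (lN - l1))"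
      unfolding BH by (simp add: algebra_simps)
    also have "\<dots> = 0" using eqn by simp
    finally show ?thesis .
  qed
  have rows: "\<forall>i\<in>C. (\<Sum>j\<in>C - {i}. T i j) = 0"
  proof -
    have nn: "\<forall>i\<in>C. (\<Sum>j\<in>C - {i}. T i j) \<ge> 0"
    proof
      fix i assume "i \<in> C"
      show "(\<Sum>j\<in>C - {i}. T i j) \<ge> 0"
      proof (rule sum_nonneg)
        fix j assume "j \<in> C - {i}"
        hence "i \<noteq> j" by auto
        thus "T i j \<ge> 0" by (rule Tnn)
      qed
    qed
    have "((\<Sum>i\<in>C. \<Sum>j\<in>C - {i}. T i j) = 0) = (\<forall>i\<in>C. (\<Sum>j\<in>C - {i}. T i j) = 0)"
      by (rule sum_nonneg_eq_0_iff[OF fC]) (use nn in auto)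
    thus ?thesis using off by simp
  qed
  have Tz: "\<forall>i\<in>C. \<forall>j\<in>C. i \<noteq> j \<longrightarrow> T i j = 0"
  proof (intro ballI impI)
    fix i j assume "i \<in> C" "j \<in> C" "i \<noteq> j"
    have "(\<Sum>j\<in>C - {i}. T i j) = 0" using rows \<open>i \<in> C\<close> by simp
    moreover have "((\<Sum>j\<in>C - {i}. T i j) = 0) = (\<forall>j'\<in>C - {i}. T i j' = 0)"
      by (rule sum_nonneg_eq_0_iff) (use fC Tnn in auto)
    ultimately have "\<forall>j'\<in>C - {i}. T i j' = 0" by simp
    thus "T i j = 0" using \<open>j \<in> C\<close> \<open>i \<noteq> j\<close> by simp
  qed
  show "\<forall>i\<in>{1..k}. \<forall>j\<in>{1..k}. i \<noteq> j \<longrightarrow>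
           Q (h_ij c h i j) = lN * ip (h_ij c h i j) (h_ij c h i j)"
  proof (intro ballI impI)
    fix i j assume "i \<in> {1..k}" "j \<in> {1..k}" "i \<noteq> j"
    hence "T i j = 0" using Tz unfolding C_def by blast
    thus "Q (h_ij c h i j) = lN * ip (h_ij c h i j) (h_ij c h i j)" using Tij[OF \<open>i \<noteq> j\<close>] by simp
  qed
  show "\<forall>i\<in>{1..k}. \<exists>v. c v = i \<and> h $ v \<noteq> 0"
  proof (rule ccontr)
    assume "\<not> ?thesis"
    then obtain i0 where i0: "i0 \<in> C" "\<forall>v. c v = i0 \<longrightarrow> h $ v = 0" unfolding C_def by blast
    have p0: "pf c h i0 = (\<lambda>v. 0)" using i0(2) by (auto simp: pf_def fun_eq_iff)
    have N0: "Nc c h i0 = 0" using i0(2) unfolding Nc_def by (intro sum.neutral) auto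
    have S0: "Sc c h i0 j = 0" for j unfolding Sc_def p0 by simp
    have "(\<Sum>j\<in>C - {i0}. T i0 j) = (lN - 1) * (\<Sum>j\<in>C - {i0}. Nc c h j)"
      unfolding T_def N0 S0 by (simp add: sum_distrib_left)
    also have "(\<Sum>j\<in>C - {i0}. Nc c h j) = NH"
      using sNc fC i0(1) N0 by (simp add: sum_diff1)
    finally have "(lN - 1) * NH = 0" using rows i0(1) by simp
    thus False using lN NHpos by simp
  qed
qed

lemma Nc_nonneg: "Nc c h i \<ge> 0"
  unfolding Nc_def using d_pos
  by (intro sum_nonneg) (simp add: less_imp_le mult.assoc)

lemma main_local:
  assumes Anz: "\<exists>v w. a v w \<noteq> 0" and col: "proper_strong_coloring E k c"
    and eqn: "real k * (lambda_max E \<phi> - 1) = lambda_max E \<phi> - l1"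
    and g: "L g = l1 *\<^sub>R g" "g \<noteq> 0"
  shows "\<forall>i\<in>{1..k}. \<exists>v. c v = i \<and> g $ v \<noteq> 0"
    and "\<forall>i\<in>{1..k}. \<forall>j\<in>{1..k}. i \<noteq> j \<longrightarrow>
           Q (h_ij c g i j) = lambda_max E \<phi> * ip (h_ij c g i j) (h_ij c g i j)
         \<and> ip (h_ij c g i j) (h_ij c g i j) > 0
         \<and> L (h_ij c g i j) = lambda_max E \<phi> *\<^sub>R h_ij c g i j
         \<and> h_ij c g i j \<noteq> 0"
proof -
  note lf = lmax_facts[OF Anz]
  note cr = core[OF col lf(2) lf(1) g eqn]
  show "\<forall>i\<in>{1..k}. \<exists>v. c v = i \<and> g $ v \<noteq> 0" using cr(1) .
  show "\<forall>i\<in>{1..k}. \<forall>j\<in>{1..k}. i \<noteq> j \<longrightarrow>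
           Q (h_ij c g i j) = lambda_max E \<phi> * ip (h_ij c g i j) (h_ij c g i j)
         \<and> ip (h_ij c g i j) (h_ij c g i j) > 0
         \<and> L (h_ij c g i j) = lambda_max E \<phi> *\<^sub>R h_ij c g i j
         \<and> h_ij c g i j \<noteq> 0"
  proof (intro ballI impI)
    fix i j assume ij: "i \<in> {1..k}" "j \<in> {1..k}" "i \<noteq> j"
    have Qe: "Q (h_ij c g i j) = lambda_max E \<phi> * ip (h_ij c g i j) (h_ij c g i j)"
      using cr(2) ij by blast
    obtain v where v: "c v = i" "g $ v \<noteq> 0" using cr(1) ij(1) by blast
    have "h_ij c g i j $ v \<noteq> 0" using v unfolding h_ij_def by simp
    hence nz: "h_ij c g i j \<noteq> 0" by (metis zero_index)
    show "Q (h_ij c g i j) = lambda_max E \<phi> * ip (h_ij c g i j) (h_ij c g i j)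
         \<and> ip (h_ij c g i j) (h_ij c g i j) > 0
         \<and> L (h_ij c g i j) = lambda_max E \<phi> *\<^sub>R h_ij c g i j
         \<and> h_ij c g i j \<noteq> 0"
      using Qe nz ip_pos variational[OF lf(2) Qe] by blast
  qed
qed

end

lemma tri_indep:
  fixes F :: "'i \<Rightarrow> real^'v::finite" and x :: "'i \<Rightarrow> 'v" and r :: "'i \<Rightarrow> nat"
  assumes fin: "finite I" and nz: "\<forall>i\<in>I. F i $ x i \<noteq> 0"
    and tri: "\<forall>i\<in>I. \<forall>j\<in>I. j \<noteq> i \<and> r i \<le> r j \<longrightarrow> F j $ x i = 0"
  shows "inj_on F I" "independent (F ` I)"
proof -
  show inj: "inj_on F I"
  proof (rule inj_onI)
    fix i j assume ij: "i \<in> I" "j \<in> I" "F i = F j"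
    show "i = j"
    proof (rule ccontr)
      assume "i \<noteq> j"
      show False
      proof (cases "r i \<le> r j")
        case True
        hence "F j $ x i = 0" using tri ij \<open>i \<noteq> j\<close> by metis
        thus False using nz ij by metis
      next
        case False
        hence "F i $ x j = 0" using tri ij \<open>i \<noteq> j\<close> by (metis nat_le_linear)
        thus False using nz ij by metis
      qed
    qed
  qed
  show "independent (F ` I)"
  proof
    assume "dependent (F ` I)"
    then obtain u b0 where u: "(\<Sum>b\<in>F ` I. u b *\<^sub>R b) = 0" "b0 \<in> F ` I" "u b0 \<noteq> 0"
      using dependent_finite[of "F ` I"] fin by blast
    define U where "U i = u (F i)" for i
    have s0: "(\<Sum>i\<in>I. U i *\<^sub>R F i) = 0"
      using u(1) unfolding sum.reindex[OF inj] U_def by simp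
    define W where "W = {i\<in>I. U i \<noteq> 0}"
    have Wne: "W \<noteq> {}" using u(2,3) unfolding W_def U_def by auto
    have fW: "finite W" using fin by (simp add: W_def)
    define m where "m = Min (r ` W)"
    have "m \<in> r ` W" unfolding m_def using fW Wne by (intro Min_in) auto
    then obtain i0 where i0: "i0 \<in> W" "r i0 = m" by auto
    have mle: "\<forall>i\<in>W. r i0 \<le> r i" using fW i0(2) unfolding m_def by simp
    have i0I: "i0 \<in> I" "U i0 \<noteq> 0" using i0(1) by (auto simp: W_def)
    have z: "\<forall>i\<in>I - {i0}. U i * F i $ x i0 = 0"
    proof
      fix i assume i: "i \<in> I - {i0}"
      show "U i * F i $ x i0 = 0"
      proof (cases "U i = 0")
        case False
        hence "i \<in> W" using i by (simp add: W_def)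
        hence "r i0 \<le> r i" using mle by blast
        hence "F i $ x i0 = 0" using tri i i0I by blast
        thus ?thesis by simp
      qed simp
    qed
    have "0 = (\<Sum>i\<in>I. U i *\<^sub>R F i) $ x i0" using s0 by simp
    also have "\<dots> = (\<Sum>i\<in>I. U i * F i $ x i0)" by (simp add: sum_component)
    also have "\<dots> = U i0 * F i0 $ x i0 + (\<Sum>i\<in>I - {i0}. U i * F i $ x i0)"
      using fin i0I(1) by (simp add: sum.remove)
    also have "\<dots> = U i0 * F i0 $ x i0" using sum.neutral[OF z] by simp
    finally show False using i0I nz by simp
  qed
qed


theorem mainTheorem3:
  fixes E :: "'v::finite set set" and \<phi> :: "'v \<Rightarrow> 'v set \<Rightarrow> int"
    and h :: "real ^ 'v" and c :: "'v \<Rightarrow> nat"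
  assumes hyp: "oriented_hypergraph E \<phi>"
    and deg: "\<forall>v. hdeg E v \<ge> 1"
    and Anz: "\<exists>v w. hadj E \<phi> v w \<noteq> 0"
    and chi: "real (chrom E) = (lambda_max E \<phi> - lambda_min E \<phi>) / (lambda_max E \<phi> - 1)"
    and h: "is_eigenfunction E \<phi> (lambda_min E \<phi>) h"
    and col: "proper_strong_coloring E (chrom E) c"
  shows "(\<forall>i\<in>{1..chrom E}. \<exists>v. c v = i \<and> h $ v \<noteq> 0)
    \<and> (\<forall>i j. 1 \<le> i \<and> i < j \<and> j \<le> chrom E \<longrightarrow> S_h E \<phi> c h i j \<ge> 0)
    \<and> (\<forall>i j. 1 \<le> i \<and> i < j \<and> j \<le> chrom E \<longrightarrow>
          RQ E \<phi> (h_ij c h i j) = lambda_max E \<phi>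
        \<and> lambda_max E \<phi> = (real (chrom E) - lambda_min E \<phi>) / (real (chrom E) - 1)
        \<and> is_eigenfunction E \<phi> (lambda_max E \<phi>) (h_ij c h i j))
    \<and> eig_mult E \<phi> (lambda_max E \<phi>) \<ge> chrom E - 1
    \<and> (eig_mult E \<phi> (lambda_min E \<phi>) > 1 \<longrightarrow> eig_mult E \<phi> (lambda_max E \<phi>) > chrom E - 1)"
proof -
  interpret OH E \<phi> using deg by unfold_locales
  define k where "k = chrom E"
  define lN where "lN = lambda_max E \<phi>"
  define l1 where "l1 = lambda_min E \<phi>"
  note lf = lmax_facts[OF Anz, folded lN_def]
  have colk: "proper_strong_coloring E k c" using col by (simp add: k_def)
  have hL: "L h = l1 *\<^sub>R h" "h \<noteq> 0" using h unfolding is_eigenfunction_def l1_def by auto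
  have eqn: "real k * (lN - 1) = lN - l1"
    using chi lf(1) unfolding k_def lN_def l1_def by (simp add: field_simps)
  have k2: "k \<ge> 2"
  proof -
    obtain v w where vw: "a v w \<noteq> 0" using Anz by blast
    have "v \<noteq> w" using vw a_diag by metis
    have "\<exists>e\<in>E. v \<in> e \<and> w \<in> e"
    proof (rule ccontr)
      assume "\<not> ?thesis"
      hence e1: "{e \<in> E. v \<in> e \<and> w \<in> e \<and> \<phi> v e = - \<phi> w e} = {}"
        and e2: "{e \<in> E. v \<in> e \<and> w \<in> e \<and> \<phi> v e = \<phi> w e} = {}" by auto
      have "a v w = 0" unfolding hadj_def e1 e2 by simp
      thus False using vw by simp
    qed
    hence "c v \<noteq> c w" using colk \<open>v \<noteq> w\<close> unfolding proper_strong_coloring_def by blast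
    moreover have "c v \<in> {1..k}" "c w \<in> {1..k}" using colk unfolding proper_strong_coloring_def by auto
    ultimately show ?thesis by auto
  qed
  note ml = main_local[OF Anz colk eqn[unfolded lN_def] hL, folded lN_def]
  have supp: "\<forall>i\<in>{1..k}. \<exists>v. c v = i \<and> h $ v \<noteq> 0" using ml(1) .
  have P: "Q (h_ij c h i j) = lN * ip (h_ij c h i j) (h_ij c h i j)
         \<and> ip (h_ij c h i j) (h_ij c h i j) > 0
         \<and> L (h_ij c h i j) = lN *\<^sub>R h_ij c h i j
         \<and> h_ij c h i j \<noteq> 0" if "1 \<le> i" "i < j" "j \<le> k" for i j
    using ml(2) that by auto
  have part2: "S_h E \<phi> c h i j \<ge> 0" if "1 \<le> i" "i < j" "j \<le> k" for i j
  proof -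
    have ij: "i \<noteq> j" using that by simp
    have "Nc c h i + Nc c h j + 2 * Sc c h i j = lN * (Nc c h i + Nc c h j)"
      using P[OF that] Q_hij[OF colk ij] N_hij[OF ij] by simp
    hence "2 * Sc c h i j = (lN - 1) * (Nc c h i + Nc c h j)" by (simp add: algebra_simps)
    moreover have "(lN - 1) * (Nc c h i + Nc c h j) \<ge> 0"
      using lf(1) Nc_nonneg[of c h i] Nc_nonneg[of c h j] by simp
    ultimately show ?thesis unfolding S_h_Sc by simp
  qed
  have lNform: "lN = (real k - l1) / (real k - 1)"
    using eqn k2 by (simp add: field_simps)
  have part3: "RQ E \<phi> (h_ij c h i j) = lN \<and> lN = (real k - l1) / (real k - 1)
       \<and> is_eigenfunction E \<phi> lN (h_ij c h i j)" if "1 \<le> i" "i < j" "j \<le> k" for i j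
    using P[OF that] lNform unfolding RQ_def is_eigenfunction_def Q_def[symmetric] by simp
  obtain pt where pt: "\<forall>i\<in>{1..k}. c (pt i) = i \<and> h $ pt i \<noteq> 0" using supp by metis
  define SN where "SN = {f. hlap E \<phi> f = lN *\<^sub>R f}"
  have part4: "eig_mult E \<phi> lN \<ge> k - 1"
  proof -
    define F where "F j = h_ij c h 1 j" for j
    have c1: "\<forall>i\<in>{2..k}. F i $ pt i \<noteq> 0" using pt by (auto simp: F_def h_ij_def)
    have c2: "\<forall>i\<in>{2..k}. \<forall>j\<in>{2..k}. j \<noteq> i \<and> (0::nat) \<le> 0 \<longrightarrow> F j $ pt i = 0"
      using pt by (auto simp: F_def h_ij_def)
    note ti = tri_indep[OF finite_atLeastAtMost c1 c2]
    have "F ` {2..k} \<subseteq> SN" using P k2 by (auto simp: F_def SN_def)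
    hence "card (F ` {2..k}) \<le> dim SN" using independent_card_le_dim ti(2) by blast
    moreover have "card (F ` {2..k}) = k - 1" using card_image[OF ti(1)] by simp
    ultimately show ?thesis unfolding eig_mult_def SN_def by simp
  qed
  have part5: "eig_mult E \<phi> lN > k - 1" if m1: "eig_mult E \<phi> l1 > 1"
  proof -
    define S1 where "S1 = {f. hlap E \<phi> f = l1 *\<^sub>R f}"
    have "\<exists>g\<in>S1. g \<notin> span {h}"
    proof (rule ccontr)
      assume "\<not> ?thesis"
      hence "S1 \<subseteq> span {h}" by blast
      hence "dim S1 \<le> card {h}" by (intro dim_le_card) auto
      thus False using m1 unfolding eig_mult_def S1_def by simp
    qed
    then obtain g where g: "L g = l1 *\<^sub>R g" "g \<notin> span {h}" unfolding S1_def by blast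
    define v0 where "v0 = pt 1"
    have v0: "c v0 = 1" "h $ v0 \<noteq> 0" using pt k2 by (auto simp: v0_def)
    define g' where "g' = g - (g $ v0 / h $ v0) *\<^sub>R h"
    have g'L: "L g' = l1 *\<^sub>R g'" unfolding g'_def L_diff L_scale g hL(1) by (simp add: algebra_simps)
    have g'0: "g' \<noteq> 0"
    proof
      assume "g' = 0"
      hence "g = (g $ v0 / h $ v0) *\<^sub>R h" by (simp add: g'_def)
      moreover have "(g $ v0 / h $ v0) *\<^sub>R h \<in> span {h}" by (intro span_scale span_base) simp
      ultimately show False using g(2) by simp
    qed
    have g'v0: "g' $ v0 = 0" using v0 by (simp add: g'_def)
    note ml' = main_local[OF Anz colk eqn[unfolded lN_def] g'L g'0, folded lN_def]
    obtain pt' where pt': "\<forall>i\<in>{1..k}. c (pt' i) = i \<and> g' $ pt' i \<noteq> 0" using ml'(1) by metis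
    have g12: "L (h_ij c g' 1 2) = lN *\<^sub>R h_ij c g' 1 2" using ml'(2) k2 by auto
    define F where "F j = (if j = 1 then h_ij c g' 1 2 else h_ij c h 1 j)" for j
    define x where "x j = (if j = 1 then pt' 2 else if j = 2 then v0 else pt j)" for j
    define r :: "nat \<Rightarrow> nat" where "r j = (if j = 1 then 2 else if j = 2 then 1 else 0)" for j
    have c1: "\<forall>i\<in>{1..k}. F i $ x i \<noteq> 0"
      proof
        fix i assume i: "i \<in> {1..k}"
        show "F i $ x i \<noteq> 0"
        proof (cases "i = 1")
          case True thus ?thesis using pt' k2 by (auto simp: F_def x_def h_ij_def)
        next
          case False
          show ?thesis
          proof (cases "i = 2")
            case True thus ?thesis using v0 by (auto simp: F_def x_def h_ij_def)
          next
            case False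
            thus ?thesis using \<open>i \<noteq> 1\<close> pt i by (auto simp: F_def x_def h_ij_def)
          qed
        qed
      qed
    have c2: "\<forall>i\<in>{1..k}. \<forall>j\<in>{1..k}. j \<noteq> i \<and> r i \<le> r j \<longrightarrow> F j $ x i = 0"
      proof (intro ballI impI)
        fix i j assume i: "i \<in> {1..k}" and j: "j \<in> {1..k}" and ji: "j \<noteq> i \<and> r i \<le> r j"
        show "F j $ x i = 0"
        proof (cases "i = 1")
          case True thus ?thesis using ji by (auto simp: r_def split: if_splits)
        next
          case False
          show ?thesis
          proof (cases "i = 2")
            case True
            hence "j = 1" using ji by (auto simp: r_def split: if_splits)
            thus ?thesis using True v0 g'v0 by (simp add: F_def x_def h_ij_def)
          next
            case False
            have "c (pt i) = i" using pt i by blast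
            thus ?thesis using \<open>i \<noteq> 1\<close> False ji by (auto simp: F_def x_def h_ij_def)
          qed
        qed
      qed
    note ti = tri_indep[OF finite_atLeastAtMost c1 c2]
    have "F ` {1..k} \<subseteq> SN"
    proof
      fix f assume "f \<in> F ` {1..k}"
      then obtain j where j: "j \<in> {1..k}" "f = F j" by blast
      show "f \<in> SN"
      proof (cases "j = 1")
        case True
        hence "f = h_ij c g' 1 2" using j(2) by (simp add: F_def)
        thus ?thesis using g12 by (simp add: SN_def)
      next
        case False
        hence "1 < j" "j \<le> k" using j by auto
        hence "L (h_ij c h 1 j) = lN *\<^sub>R h_ij c h 1 j" using P[of 1 j] by blast
        moreover have "f = h_ij c h 1 j" using j(2) False by (simp add: F_def)
        ultimately show ?thesis by (simp add: SN_def)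
      qed
    qed
    hence "card (F ` {1..k}) \<le> dim SN" by (rule independent_card_le_dim[OF _ ti(2)])
    moreover have "card (F ` {1..k}) = k" using card_image[OF ti(1)] by simp
    ultimately show ?thesis using k2 unfolding eig_mult_def SN_def by simp
  qed
  show ?thesis
    using supp part2 part3 part4 part5
    unfolding k_def[symmetric] lN_def[symmetric] l1_def[symmetric] by blast
qed

end
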